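(* Every W-state graph is $2$-connected.
   Context: Graphs may have parallel edges but no loops. A half-edge $2$-colouring $c$ of $G$ assigns to each pair $(e,w)$ with $w$ an endpoint of edge $e$ a colour in $\{0,1\}$ (0 = blue, 1 = red). An edge $e=uv$ is bichromatic if $c(e,u)\neq c(e,v)$ and monochromatic otherwise; standing convention: monochromatic edges are blue at both ends. A graph is matching-covered if every edge lies in some perfect matching. A W-state graph is a half-edge $2$-coloured matching-covered graph $(G,c)$ in which every perfect matching contains exactly one bichromatic edge, and every vertex $v$ is incident with an edge $e$ with $c(e,v)=1$. *)

theory Defs
  imports Main
begin

text \<open>A finite loopless multigraph: vertex set V, edge set E (edge identities, so
parallel edges are allowed), and an endpoint map ends, each edge having exactly
two distinct endpoints in V.\<close>
definition multigraph :: "'v set \<Rightarrow> 'e set \<Rightarrow> ('e \<Rightarrow> 'v set) \<Rightarrow> bool" where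
  "multigraph V E ends \<longleftrightarrow> finite V \<and> finite E \<and>
     (\<forall>e\<in>E. ends e \<subseteq> V \<and> card (ends e) = 2)"

definition perfect_matching :: "'v set \<Rightarrow> 'e set \<Rightarrow> ('e \<Rightarrow> 'v set) \<Rightarrow> 'e set \<Rightarrow> bool" where
  "perfect_matching V E ends M \<longleftrightarrow> M \<subseteq> E \<and> (\<forall>v\<in>V. \<exists>!e. e \<in> M \<and> v \<in> ends e)"

definition matching_covered :: "'v set \<Rightarrow> 'e set \<Rightarrow> ('e \<Rightarrow> 'v set) \<Rightarrow> bool" where
  "matching_covered V E ends \<longleftrightarrow> multigraph V E ends \<and>
     (\<forall>e\<in>E. \<exists>M. perfect_matching V E ends M \<and> e \<in> M)"

text \<open>Half-edge 2-colouring: c e w is the colour of the half-edge (e,w);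
True = 1 = red, False = 0 = blue.\<close>
definition bichromatic :: "('e \<Rightarrow> 'v set) \<Rightarrow> ('e \<Rightarrow> 'v \<Rightarrow> bool) \<Rightarrow> 'e \<Rightarrow> bool" where
  "bichromatic ends c e \<longleftrightarrow> (\<exists>u v. ends e = {u, v} \<and> c e u \<noteq> c e v)"

text \<open>W-state graph (including the standing convention that monochromatic edges
are blue at both ends, i.e. no edge is red at both ends).\<close>
definition W_state_graph :: "'v set \<Rightarrow> 'e set \<Rightarrow> ('e \<Rightarrow> 'v set) \<Rightarrow> ('e \<Rightarrow> 'v \<Rightarrow> bool) \<Rightarrow> bool" where
  "W_state_graph V E ends c \<longleftrightarrow>
     matching_covered V E ends \<and>
     (\<forall>e\<in>E. \<not> bichromatic ends c e \<longrightarrow> (\<forall>w\<in>ends e. \<not> c e w)) \<and>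
     (\<forall>M. perfect_matching V E ends M \<longrightarrow> card {e \<in> M. bichromatic ends c e} = 1) \<and>
     (\<forall>v\<in>V. \<exists>e\<in>E. v \<in> ends e \<and> c e v)"

definition adj_in :: "'e set \<Rightarrow> ('e \<Rightarrow> 'v set) \<Rightarrow> 'v set \<Rightarrow> 'v \<Rightarrow> 'v \<Rightarrow> bool" where
  "adj_in E ends S u v \<longleftrightarrow> u \<in> S \<and> v \<in> S \<and> (\<exists>e\<in>E. ends e = {u, v})"

definition connected_on :: "'e set \<Rightarrow> ('e \<Rightarrow> 'v set) \<Rightarrow> 'v set \<Rightarrow> bool" where
  "connected_on E ends S \<longleftrightarrow> S \<noteq> {} \<and> (\<forall>u\<in>S. \<forall>v\<in>S. (adj_in E ends S)\<^sup>*\<^sup>* u v)"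

definition two_connected :: "'v set \<Rightarrow> 'e set \<Rightarrow> ('e \<Rightarrow> 'v set) \<Rightarrow> bool" where
  "two_connected V E ends \<longleftrightarrow> card V \<ge> 2 \<and> connected_on E ends V \<and>
     (\<forall>x\<in>V. connected_on E ends (V - {x}))"

end

theory Submission
  imports Defs
begin

lemma edge_ends:
  assumes "multigraph V E ends" "e \<in> E"
  obtains p q where "ends e = {p,q}" "p \<noteq> q" "p \<in> V" "q \<in> V"
proof -
  have "ends e \<subseteq> V" "card (ends e) = 2" using assms unfolding multigraph_def by auto
  then show ?thesis using that by (auto simp: card_2_iff)
qed

lemma even_closed:
  assumes mg: "multigraph V E ends" and pm: "perfect_matching V E ends M"
    and SV: "S \<subseteq> V"
    and cl: "\<And>e. e \<in> M \<Longrightarrow> ends e \<inter> S \<noteq> {} \<Longrightarrow> ends e \<subseteq> S"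
  shows "even (card S)"
proof -
  define F where "F = ends ` {e\<in>M. ends e \<inter> S \<noteq> {}}"
  have ME: "M \<subseteq> E" using pm unfolding perfect_matching_def by auto
  have uniq: "\<And>v. v \<in> V \<Longrightarrow> \<exists>!e. e \<in> M \<and> v \<in> ends e"
    using pm unfolding perfect_matching_def by blast
  have finE: "finite E" using mg unfolding multigraph_def by auto
  have "finite {e\<in>M. ends e \<inter> S \<noteq> {}}" using ME finE
    by (rule_tac finite_subset[of _ E]) auto
  then have finF: "finite F" unfolding F_def by simp
  have c2: "\<And>X. X \<in> F \<Longrightarrow> card X = 2" unfolding F_def using ME mg
    unfolding multigraph_def by auto
  have fin2: "\<And>X. X \<in> F \<Longrightarrow> finite X" using c2
    by (metis card.infinite zero_neq_numeral)
  have U: "\<Union>F = S"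
  proof
    show "\<Union>F \<subseteq> S" unfolding F_def using cl by auto
    show "S \<subseteq> \<Union>F"
    proof
      fix s assume "s \<in> S"
      then have "s \<in> V" using SV by auto
      then obtain e where "e \<in> M" "s \<in> ends e" using uniq by blast
      then show "s \<in> \<Union>F" unfolding F_def using \<open>s \<in> S\<close> by blast
    qed
  qed
  have pw: "pairwise disjnt F"
    unfolding pairwise_def disjnt_def
  proof (intro ballI impI)
    fix X Y assume "X \<in> F" "Y \<in> F" "X \<noteq> Y"
    then obtain e1 e2 where e: "e1 \<in> M" "e2 \<in> M" "X = ends e1" "Y = ends e2"
      unfolding F_def by auto
    show "X \<inter> Y = {}"
    proof (rule ccontr)
      assume "X \<inter> Y \<noteq> {}"
      then obtain w where w: "w \<in> ends e1" "w \<in> ends e2" using e by auto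
      have "ends e1 \<subseteq> V" using e ME mg unfolding multigraph_def by auto
      then have "w \<in> V" using w by auto
      then have "e1 = e2" using uniq w e by blast
      then show False using e \<open>X \<noteq> Y\<close> by simp
    qed
  qed
  have "card S = sum card F" using card_Union_disjoint[OF pw fin2] U by simp
  also have "\<dots> = sum (\<lambda>_. 2) F" using c2 by simp
  also have "\<dots> = 2 * card F" by simp
  finally show ?thesis by simp
qed

lemma reach_closed:
  assumes "(adj_in E ends S)\<^sup>*\<^sup>* u w" "u \<in> T"
    and "\<And>e a b. e \<in> E \<Longrightarrow> ends e = {a,b} \<Longrightarrow> a \<in> T \<Longrightarrow> b \<in> S \<Longrightarrow> b \<in> T"
  shows "w \<in> T"
  using assms(1,2)
proof (induction rule: rtranclp_induct)
  case base then show ?case by simp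
next
  case (step y z)
  then show ?case using assms(3) unfolding adj_in_def by blast
qed


lemma W_facts:
  assumes "W_state_graph V E ends c"
  shows "multigraph V E ends"
    and "\<And>e. e \<in> E \<Longrightarrow> \<exists>M. perfect_matching V E ends M \<and> e \<in> M"
    and "\<And>e w. e \<in> E \<Longrightarrow> w \<in> ends e \<Longrightarrow> c e w \<Longrightarrow> bichromatic ends c e"
    and "\<And>M. perfect_matching V E ends M \<Longrightarrow> card {e \<in> M. bichromatic ends c e} = 1"
    and "\<And>v. v \<in> V \<Longrightarrow> \<exists>e\<in>E. v \<in> ends e \<and> c e v"
  using assms unfolding W_state_graph_def matching_covered_def by blast+

lemma W_connected:
  assumes W: "W_state_graph V E ends c"
  shows "connected_on E ends V"
proof -
  note mg = W_facts(1)[OF W] and mc = W_facts(2)[OF W] and bi = W_facts(3)[OF W]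
    and one = W_facts(4)[OF W] and red = W_facts(5)[OF W]
  have Vne: "V \<noteq> {}"
  proof
    assume "V = {}"
    then have "perfect_matching V E ends {}" unfolding perfect_matching_def by simp
    from one[OF this] show False by simp
  qed
  show ?thesis unfolding connected_on_def
  proof (intro conjI Vne ballI, rule ccontr)
    fix u v assume uV: "u \<in> V" and vV: "v \<in> V" and nr: "\<not> (adj_in E ends V)\<^sup>*\<^sup>* u v"
    define A where "A = {w\<in>V. (adj_in E ends V)\<^sup>*\<^sup>* u w}"
    define B where "B = V - A"
    have uA: "u \<in> A" unfolding A_def using uV by simp
    have vB: "v \<in> B" unfolding B_def A_def using vV nr by simp
    have closA: "ends e \<subseteq> A" if "e \<in> E" "ends e \<inter> A \<noteq> {}" for e
    proof -
      obtain p q where pq: "ends e = {p,q}" "p \<noteq> q" "p \<in> V" "q \<in> V"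
        using edge_ends[OF mg \<open>e \<in> E\<close>] by blast
      have ad1: "adj_in E ends V p q" unfolding adj_in_def using pq \<open>e \<in> E\<close> by blast
      have ad2: "adj_in E ends V q p" unfolding adj_in_def using pq \<open>e \<in> E\<close>
        by (metis insert_commute)
      have "p \<in> A \<or> q \<in> A" using that(2) pq by auto
      then have "p \<in> A \<and> q \<in> A"
        using ad1 ad2 pq unfolding A_def
        by (auto intro: rtranclp.rtrancl_into_rtrancl)
      then show ?thesis using pq by auto
    qed
    have closB: "ends e \<subseteq> B" if "e \<in> E" "ends e \<inter> B \<noteq> {}" for e
    proof -
      have "ends e \<subseteq> V" using mg that(1) unfolding multigraph_def by auto
      moreover have "ends e \<inter> A = {}"
      proof (rule ccontr)
        assume "ends e \<inter> A \<noteq> {}"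
        then have "ends e \<subseteq> A" using closA that(1) by blast
        then show False using that(2) unfolding B_def by auto
      qed
      ultimately show ?thesis unfolding B_def by auto
    qed
    obtain e1 where e1: "e1 \<in> E" "u \<in> ends e1" "c e1 u" using red uV by blast
    obtain e2 where e2: "e2 \<in> E" "v \<in> ends e2" "c e2 v" using red vV by blast
    have b1: "bichromatic ends c e1" using bi e1 by blast
    have b2: "bichromatic ends c e2" using bi e2 by blast
    have A1: "ends e1 \<subseteq> A" using closA e1 uA by blast
    have B2: "ends e2 \<subseteq> B" using closB e2 vB by blast
    obtain M1 where M1: "perfect_matching V E ends M1" "e1 \<in> M1" using mc e1 by blast
    obtain M2 where M2: "perfect_matching V E ends M2" "e2 \<in> M2" using mc e2 by blast
    define M where "M = {e\<in>M1. ends e \<subseteq> A} \<union> {e\<in>M2. ends e \<subseteq> B}"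
    have M1E: "M1 \<subseteq> E" and u1: "\<And>w. w \<in> V \<Longrightarrow> \<exists>!e. e \<in> M1 \<and> w \<in> ends e"
      using M1(1) unfolding perfect_matching_def by blast+
    have M2E: "M2 \<subseteq> E" and u2: "\<And>w. w \<in> V \<Longrightarrow> \<exists>!e. e \<in> M2 \<and> w \<in> ends e"
      using M2(1) unfolding perfect_matching_def by blast+
    have AB: "A \<inter> B = {}" "A \<union> B = V" "A \<subseteq> V" unfolding B_def A_def by auto
    have pmM: "perfect_matching V E ends M"
      unfolding perfect_matching_def
    proof (intro conjI ballI)
      show "M \<subseteq> E" unfolding M_def using M1E M2E by auto
      fix w assume wV: "w \<in> V"
      show "\<exists>!e. e \<in> M \<and> w \<in> ends e"
      proof (cases "w \<in> A")
        case True
        obtain e where e: "e \<in> M1" "w \<in> ends e" using u1 wV by blast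
        have "ends e \<subseteq> A" using closA e M1E True by blast
        then have eM: "e \<in> M" unfolding M_def using e by auto
        show ?thesis
        proof (rule ex1I[of _ e])
          show "e \<in> M \<and> w \<in> ends e" using eM e by simp
          fix e' assume e': "e' \<in> M \<and> w \<in> ends e'"
          then have "e' \<in> M1" unfolding M_def using True AB by auto
          then show "e' = e" using u1 wV e e' by blast
        qed
      next
        case False
        then have wB: "w \<in> B" using wV AB by auto
        obtain e where e: "e \<in> M2" "w \<in> ends e" using u2 wV by blast
        have "ends e \<subseteq> B" using closB e M2E wB by blast
        then have eM: "e \<in> M" unfolding M_def using e by auto
        show ?thesis
        proof (rule ex1I[of _ e])
          show "e \<in> M \<and> w \<in> ends e" using eM e by simp
          fix e' assume e': "e' \<in> M \<and> w \<in> ends e'"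
          then have "e' \<in> M2" unfolding M_def using False by auto
          then show "e' = e" using u2 wV e e' by blast
        qed
      qed
    qed
    have ne: "e1 \<noteq> e2" using A1 B2 e1 e2 AB uA by blast
    have sub: "{e1, e2} \<subseteq> {e \<in> M. bichromatic ends c e}"
      unfolding M_def using M1 M2 A1 B2 b1 b2 by auto
    have finE: "finite E" using mg unfolding multigraph_def by auto
    have "finite {e \<in> M. bichromatic ends c e}"
      using pmM finE unfolding perfect_matching_def by (auto intro: finite_subset)
    from card_mono[OF this sub] ne have "card {e \<in> M. bichromatic ends c e} \<ge> 2" by simp
    with one[OF pmM] show False by simp
  qed
qed


lemma x_edge:
  assumes mg: "multigraph V E ends" and con: "connected_on E ends V"
    and TS: "T \<subseteq> V - {x}" and tT: "t \<in> T" and t': "t' \<in> V - {x} - T"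
    and cl: "\<And>e. e \<in> E \<Longrightarrow> ends e \<subseteq> V - {x} \<Longrightarrow> ends e \<inter> T \<noteq> {} \<Longrightarrow> ends e \<subseteq> T"
  shows "\<exists>f\<in>E. x \<in> ends f \<and> ends f \<inter> T \<noteq> {}"
proof (rule ccontr)
  assume nf: "\<not> ?thesis"
  have clV: "ends e \<subseteq> T" if "e \<in> E" "ends e \<inter> T \<noteq> {}" for e
  proof -
    have "ends e \<subseteq> V" using mg that(1) unfolding multigraph_def by auto
    moreover have "x \<notin> ends e" using nf that by blast
    ultimately show ?thesis using cl that by blast
  qed
  have "t' \<in> V" "t \<in> V" using t' tT TS by auto
  then have "(adj_in E ends V)\<^sup>*\<^sup>* t t'" using con unfolding connected_on_def by blast
  then have "t' \<in> T"
  proof (rule reach_closed)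
    show "t \<in> T" by fact
    fix e a b assume "e \<in> E" "ends e = {a, b}" "a \<in> T" "b \<in> V"
    then show "b \<in> T" using clV[of e] by auto
  qed
  then show False using t' by simp
qed

theorem mainTheorem6:
  fixes V :: "'v set" and E :: "'e set" and ends :: "'e \<Rightarrow> 'v set"
    and c :: "'e \<Rightarrow> 'v \<Rightarrow> bool"
  assumes "W_state_graph V E ends c"
  shows "two_connected V E ends"
proof -
  note W = assms
  note mg = W_facts(1)[OF W] and mc = W_facts(2)[OF W] and bi = W_facts(3)[OF W]
    and one = W_facts(4)[OF W] and red = W_facts(5)[OF W]
  note con = W_connected[OF W]
  have finV: "finite V" using mg unfolding multigraph_def by auto
  have Vne: "V \<noteq> {}" using con unfolding connected_on_def by auto
  then obtain v0 where "v0 \<in> V" by blast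
  then obtain e0 where "e0 \<in> E" using red by blast
  then have "ends e0 \<subseteq> V" "card (ends e0) = 2" using mg unfolding multigraph_def by auto
  then have cV: "card V \<ge> 2" using card_mono[OF finV] by metis
  have cut: "connected_on E ends (V - {x})" if xV: "x \<in> V" for x
  proof -
    define S where "S = V - {x}"
    have Sne: "S \<noteq> {}"
    proof
      assume "S = {}"
      then have "V \<subseteq> {x}" unfolding S_def by auto
      then have "card V \<le> 1" using card_mono[of "{x}" V] by simp
      then show False using cV by simp
    qed
    show ?thesis unfolding connected_on_def S_def[symmetric]
    proof (intro conjI Sne ballI, rule ccontr)
      fix u v assume uS: "u \<in> S" and vS: "v \<in> S" and nr: "\<not> (adj_in E ends S)\<^sup>*\<^sup>* u v"
      define A where "A = {w\<in>S. (adj_in E ends S)\<^sup>*\<^sup>* u w}"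
      define B where "B = S - A"
      have uA: "u \<in> A" unfolding A_def using uS by simp
      have vB: "v \<in> B" unfolding B_def A_def using vS nr by simp
      have closA: "ends e \<subseteq> A" if "e \<in> E" "ends e \<subseteq> S" "ends e \<inter> A \<noteq> {}" for e
      proof -
        obtain p q where pq: "ends e = {p,q}" "p \<noteq> q" "p \<in> V" "q \<in> V"
          using edge_ends[OF mg \<open>e \<in> E\<close>] by blast
        have pqS: "p \<in> S" "q \<in> S" using pq that(2) by auto
        have ad1: "adj_in E ends S p q" unfolding adj_in_def using pq pqS \<open>e \<in> E\<close> by blast
        have ad2: "adj_in E ends S q p" unfolding adj_in_def using pq pqS \<open>e \<in> E\<close>
          by (metis insert_commute)
        have "p \<in> A \<or> q \<in> A" using that(3) pq by auto
        then have "p \<in> A \<and> q \<in> A"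
          using ad1 ad2 pqS unfolding A_def
          by (auto intro: rtranclp.rtrancl_into_rtrancl)
        then show ?thesis using pq by auto
      qed
      have closB: "ends e \<subseteq> B" if "e \<in> E" "ends e \<subseteq> S" "ends e \<inter> B \<noteq> {}" for e
      proof -
        have "ends e \<inter> A = {}"
        proof (rule ccontr)
          assume "ends e \<inter> A \<noteq> {}"
          then have "ends e \<subseteq> A" using closA that(1,2) by blast
          then show False using that(3) unfolding B_def by auto
        qed
        then show ?thesis using that(2) unfolding B_def by auto
      qed
      have AS: "A \<subseteq> S" "B \<subseteq> S" "A \<inter> B = {}" unfolding A_def B_def by auto
      obtain f where f: "f \<in> E" "x \<in> ends f" "ends f \<inter> B \<noteq> {}"
        using x_edge[OF mg con, of B x v u] AS vB uA closB unfolding S_def by blast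
      obtain g where g: "g \<in> E" "x \<in> ends g" "ends g \<inter> A \<noteq> {}"
        using x_edge[OF mg con, of A x u v] AS vB uA closA unfolding S_def B_def by blast
      obtain Mf where Mf: "perfect_matching V E ends Mf" "f \<in> Mf" using mc f by blast
      obtain Mg where Mg: "perfect_matching V E ends Mg" "g \<in> Mg" using mc g by blast
      have MfE: "Mf \<subseteq> E" and uf: "\<And>w. w \<in> V \<Longrightarrow> \<exists>!e. e \<in> Mf \<and> w \<in> ends e"
        using Mf(1) unfolding perfect_matching_def by blast+
      have MgE: "Mg \<subseteq> E" and ug: "\<And>w. w \<in> V \<Longrightarrow> \<exists>!e. e \<in> Mg \<and> w \<in> ends e"
        using Mg(1) unfolding perfect_matching_def by blast+
      have ex1eq: "\<And>P a b. \<exists>!y. P y \<Longrightarrow> P a \<Longrightarrow> P b \<Longrightarrow> a = b" by blast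
      have xA: "x \<notin> A" using AS unfolding S_def by auto
      have ev1: "even (card A)"
      proof (rule even_closed[OF mg Mf(1)])
        show "A \<subseteq> V" using AS unfolding S_def by auto
        fix e assume e: "e \<in> Mf" "ends e \<inter> A \<noteq> {}"
        show "ends e \<subseteq> A"
        proof (cases "x \<in> ends e")
          case True
          have "e = f" using ex1eq[OF uf[OF xV]] e True f Mf by blast
          moreover obtain p q where "ends f = {p,q}" using edge_ends[OF mg f(1)] by blast
          ultimately show ?thesis using e f AS unfolding S_def by auto
        next
          case False
          have "ends e \<subseteq> V" using mg e MfE unfolding multigraph_def by auto
          then have "ends e \<subseteq> S" using False unfolding S_def by auto
          then show ?thesis using closA e MfE by blast
        qed
      qed
      have ev2: "even (card (insert x A))"
      proof (rule even_closed[OF mg Mg(1)])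
        show "insert x A \<subseteq> V" using AS xV unfolding S_def by auto
        fix e assume e: "e \<in> Mg" "ends e \<inter> insert x A \<noteq> {}"
        show "ends e \<subseteq> insert x A"
        proof (cases "x \<in> ends e")
          case True
          have "e = g" using ex1eq[OF ug[OF xV]] e True g Mg by blast
          moreover obtain p q where "ends g = {p,q}" using edge_ends[OF mg g(1)] by blast
          ultimately show ?thesis using e g xA by auto
        next
          case False
          have "ends e \<subseteq> V" using mg e MgE unfolding multigraph_def by auto
          then have "ends e \<subseteq> S" using False unfolding S_def by auto
          moreover have "ends e \<inter> A \<noteq> {}" using e False by auto
          ultimately show ?thesis using closA e MgE by blast
        qed
      qed
      have "finite A" using AS finV unfolding S_def by (auto intro: finite_subset)
      moreover have "x \<notin> A" using AS unfolding S_def by auto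
      ultimately have "card (insert x A) = Suc (card A)" by simp
      then show False using ev1 ev2 by simp
    qed
  qed
  show ?thesis unfolding two_connected_def using cV con cut by blast
qed

end
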